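(* Let $G$ be a non-regular simple graph on $n$ vertices, and let $u,v$ be vertices of $G$ with $d_G(u)<d_G(v)$. If $F_k(G)$ is regular for some integer $k$ with $2\le k\le n-2$, then $v$ is adjacent in $G$ to every vertex of $V(G)\setminus\{u,v\}$.
   Context: For a simple graph $G=(V,E)$ on $n$ vertices and an integer $1\le k<n$, the $k$-token graph $F_k(G)$ is the graph whose vertices are all $k$-element subsets of $V$, two such subsets $A,B$ being adjacent whenever their symmetric difference $A\triangle B$ is a pair $\{a,b\}$ with $a$ adjacent to $b$ in $G$. $d_G(x)$ denotes the degree of $x$ in $G$. *)

theory Defs
  imports Main
begin

definition simple_graph :: "'a set \<Rightarrow> ('a \<Rightarrow> 'a \<Rightarrow> bool) \<Rightarrow> bool" where
  "simple_graph V E \<longleftrightarrow> finite V \<and>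
     (\<forall>x y. E x y \<longrightarrow> x \<in> V \<and> y \<in> V \<and> x \<noteq> y \<and> E y x)"

definition degree :: "'a set \<Rightarrow> ('a \<Rightarrow> 'a \<Rightarrow> bool) \<Rightarrow> 'a \<Rightarrow> nat" where
  "degree V E x = card {y \<in> V. E x y}"

definition regular :: "'a set \<Rightarrow> ('a \<Rightarrow> 'a \<Rightarrow> bool) \<Rightarrow> bool" where
  "regular V E \<longleftrightarrow> (\<exists>d. \<forall>x \<in> V. degree V E x = d)"

definition token_vertices :: "'a set \<Rightarrow> nat \<Rightarrow> 'a set set" where
  "token_vertices V k = {A. A \<subseteq> V \<and> card A = k}"

definition token_adj :: "('a \<Rightarrow> 'a \<Rightarrow> bool) \<Rightarrow> 'a set \<Rightarrow> 'a set \<Rightarrow> bool" where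
  "token_adj E A B \<longleftrightarrow> (\<exists>a b. (A - B) \<union> (B - A) = {a, b} \<and> E a b)"

end

theory Submission
  imports Defs
begin

definition nb :: "'a set \<Rightarrow> ('a \<Rightarrow> 'a \<Rightarrow> bool) \<Rightarrow> 'a \<Rightarrow> 'a set" where
  "nb V E z = {x\<in>V. E z x}"

definition cutp :: "'a set \<Rightarrow> ('a \<Rightarrow> 'a \<Rightarrow> bool) \<Rightarrow> 'a set \<Rightarrow> ('a \<times> 'a) set" where
  "cutp V E A = {(a,b). a\<in>A \<and> b\<in>V-A \<and> E a b}"

lemma swap_aux:
  assumes "finite A" "finite B" "card A = card B" "(A-B)\<union>(B-A) = {a,b}" "a\<in>A-B"
  shows "b \<in> B-A \<and> B = insert b (A-{a})"
proof -
  have c: "card (A-B) = card (B-A)"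
    using assms(1-3) by (metis card_Diff_subset_Int Int_commute finite_Int)
  have "b \<notin> A - B"
  proof
    assume "b \<in> A - B"
    then have "B - A = {}" using assms(4) assms(5) by blast
    then have "card (A-B) = 0" using c by (metis card.empty)
    then show False using assms(1,5) by auto
  qed
  then have bB: "b \<in> B - A" using assms(4) by blast
  have "A - B = {a}" "B - A = {b}" using assms(4,5) bB \<open>b \<notin> A - B\<close> by blast+
  then have "B = insert b (A-{a})" by blast
  then show ?thesis using bB by blast
qed

lemma tok_deg:
  assumes g: "simple_graph V E" and AV: "A \<subseteq> V" and cA: "card A = k" and k: "k \<ge> 1"
  shows "degree (token_vertices V k) (token_adj E) A = card (cutp V E A)"
proof -
  have fV: "finite V" using g by (simp add: simple_graph_def)
  have fA: "finite A" using AV fV finite_subset by blast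
  define f where "f = (\<lambda>(a::'a,b::'a). insert b (A - {a}))"
  have inj: "inj_on f (cutp V E A)"
  proof (rule inj_onI)
    fix p q assume p: "p \<in> cutp V E A" and q: "q \<in> cutp V E A" and e: "f p = f q"
    obtain a b where pab: "p = (a,b)" by fastforce
    obtain a' b' where qab: "q = (a',b')" by fastforce
    have h: "a\<in>A" "b\<notin>A" "a'\<in>A" "b'\<notin>A" using p q pab qab by (auto simp: cutp_def)
    have e2: "insert b (A - {a}) = insert b' (A - {a'})" using e pab qab by (simp add: f_def)
    have "b = b'" using e2 h by blast
    moreover have "a = a'"
    proof (rule ccontr)
      assume "a \<noteq> a'"
      then have "a \<in> insert b' (A - {a'})" using h by blast
      then have "a \<in> insert b (A - {a})" using e2 by simp
      then show False using h by auto
    qed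
    ultimately show "p = q" using pab qab by simp
  qed
  have img: "{B \<in> token_vertices V k. token_adj E A B} = f ` (cutp V E A)"
  proof (rule set_eqI, rule iffI)
    fix B assume "B \<in> {B \<in> token_vertices V k. token_adj E A B}"
    then have BV: "B \<subseteq> V" and cB: "card B = k" and "token_adj E A B"
      by (auto simp: token_vertices_def)
    then obtain a b where sd: "(A-B)\<union>(B-A) = {a,b}" and eab: "E a b"
      by (auto simp: token_adj_def)
    have fB: "finite B" using BV fV finite_subset by blast
    have "a \<in> A - B \<or> a \<in> B - A" using sd by blast
    then show "B \<in> f ` cutp V E A"
    proof
      assume "a \<in> A - B"
      then have r: "b \<in> B-A \<and> B = insert b (A-{a})"
        using swap_aux[OF fA fB _ sd] cA cB by simp
      then have "(a,b) \<in> cutp V E A" using \<open>a \<in> A - B\<close> eab BV by (auto simp: cutp_def)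
      then show ?thesis using r by (force simp: f_def)
    next
      assume aB: "a \<in> B - A"
      have sd': "(B-A)\<union>(A-B) = {a,b}" using sd by blast
      then have r: "b \<in> A-B \<and> A = insert b (B-{a})"
        using swap_aux[OF fB fA _ sd' aB] cA cB by simp
      have eba: "E b a" using eab g by (simp add: simple_graph_def)
      have "B = insert a (A - {b})" using r aB by blast
      moreover have "(b,a) \<in> cutp V E A" using r aB eba BV by (auto simp: cutp_def)
      ultimately show ?thesis by (force simp: f_def)
    qed
  next
    fix B assume "B \<in> f ` cutp V E A"
    then obtain a b where ab: "(a,b) \<in> cutp V E A" and B: "B = insert b (A - {a})"
      by (auto simp: f_def)
    have h: "a \<in> A" "b \<in> V" "b \<notin> A" "E a b" using ab by (auto simp: cutp_def)
    have "card B = k" using B h fA cA k by (simp add: card_Diff_singleton)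
    moreover have "B \<subseteq> V" using B h AV by blast
    moreover have "(A-B)\<union>(B-A) = {a,b}" using B h by blast
    ultimately show "B \<in> {B \<in> token_vertices V k. token_adj E A B}"
      using h by (auto simp: token_vertices_def token_adj_def)
  qed
  show ?thesis unfolding degree_def img using card_image[OF inj] by simp
qed

lemma cut_insert:
  assumes g: "simple_graph V E" and SV: "S \<subseteq> V" and z: "z \<in> V" "z \<notin> S"
  shows "int (card (cutp V E (insert z S))) = int (card (cutp V E S)) + int (degree V E z)
           - 2 * int (card (nb V E z \<inter> S))"
proof -
  have fV: "finite V" using g by (simp add: simple_graph_def)
  have sym: "\<And>x y. E x y \<Longrightarrow> E y x \<and> x \<in> V \<and> y \<in> V \<and> x \<noteq> y" using g by (simp add: simple_graph_def)
  have fin: "finite (cutp V E A)" for A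
  proof -
    have "cutp V E A \<subseteq> V \<times> V" using sym by (auto simp: cutp_def)
    then show ?thesis using fV by (simp add: finite_subset)
  qed
  define X where "X = {(z,b) | b. b \<in> V - S - {z} \<and> E z b}"
  define Y where "Y = {(a,z) | a. a \<in> S \<and> E a z}"
  have eq: "cutp V E (insert z S) = (cutp V E S - Y) \<union> X"
    using sym by (auto simp: cutp_def X_def Y_def)
  have YP: "Y \<subseteq> cutp V E S" using z sym by (auto simp: cutp_def Y_def)
  have disj: "(cutp V E S - Y) \<inter> X = {}" using z by (auto simp: X_def cutp_def)
  have fX: "finite X" using fin eq by (metis finite_Un)
  have cY: "card Y = card (nb V E z \<inter> S)"
  proof -
    have "Y = (\<lambda>a. (a,z)) ` (nb V E z \<inter> S)" using sym SV by (auto simp: Y_def nb_def)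
    moreover have "inj_on (\<lambda>a. (a,z)) (nb V E z \<inter> S)" by (auto simp: inj_on_def)
    ultimately show ?thesis by (simp add: card_image)
  qed
  have cX: "card X = card (nb V E z - S)"
  proof -
    have "X = (\<lambda>b. (z,b)) ` (nb V E z - S)" using sym by (auto simp: X_def nb_def)
    moreover have "inj_on (\<lambda>b. (z,b)) (nb V E z - S)" by (auto simp: inj_on_def)
    ultimately show ?thesis by (simp add: card_image)
  qed
  have fN: "finite (nb V E z)" using fV by (simp add: nb_def)
  have dz: "card (nb V E z) = card (nb V E z - S) + card (nb V E z \<inter> S)"
    using fN by (metis Diff_Diff_Int card_Diff_subset_Int card_mono finite_Int inf.cobounded1 le_add_diff_inverse2 Diff_subset card_Diff_subset)
  have "card (cutp V E (insert z S)) = card (cutp V E S - Y) + card X"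
    using eq disj fX fin by (simp add: card_Un_disjoint)
  moreover have "card (cutp V E S - Y) = card (cutp V E S) - card Y"
    using YP fin by (meson card_Diff_subset finite_subset)
  moreover have "card Y \<le> card (cutp V E S)" using YP fin card_mono by blast
  moreover have "degree V E z = card (nb V E z)" by (simp add: degree_def nb_def)
  ultimately show ?thesis using cX cY dz by simp
qed


theorem lemma3:
  fixes V :: "'a set" and E :: "'a \<Rightarrow> 'a \<Rightarrow> bool" and u v :: 'a and k :: nat
  assumes "simple_graph V E"
    and "\<not> regular V E"
    and "u \<in> V" and "v \<in> V"
    and "degree V E u < degree V E v"
    and "2 \<le> k" and "k \<le> card V - 2"
    and "regular (token_vertices V k) (token_adj E)"
  shows "\<forall>w \<in> V - {u, v}. E v w"
proof (rule ccontr)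
  note g = assms(1)
  have fV: "finite V" using g by (simp add: simple_graph_def)
  have sym: "\<And>x y. E x y \<Longrightarrow> E y x \<and> x \<in> V \<and> y \<in> V \<and> x \<noteq> y" using g by (simp add: simple_graph_def)
  have symE: "\<And>x y. E x y \<Longrightarrow> E y x" using sym by blast
  assume "\<not> (\<forall>w \<in> V - {u, v}. E v w)"
  then obtain w where w: "w \<in> V" "w \<noteq> u" "w \<noteq> v" "\<not> E v w" by blast
  have uv: "u \<noteq> v" using assms(5) by auto
  obtain d0 where d0: "\<And>A. A \<in> token_vertices V k \<Longrightarrow> degree (token_vertices V k) (token_adj E) A = d0"
    using assms(8) by (auto simp: regular_def)
  have cutk: "card (cutp V E A) = d0" if "A \<subseteq> V" "card A = k" for A
    using d0[of A] tok_deg[OF g that] that assms(6) by (simp add: token_vertices_def)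
  obtain y where y: "y \<in> V" "y \<noteq> u" "E v y" "\<not> E u y"
  proof (rule ccontr)
    assume "\<not> thesis"
    then have H: "\<And>y. y \<in> V \<Longrightarrow> y \<noteq> u \<Longrightarrow> E v y \<Longrightarrow> E u y" using that by blast
    have s: "nb V E v - {u} \<subseteq> nb V E u - {v}"
    proof
      fix x assume "x \<in> nb V E v - {u}"
      then have x: "x \<in> V" "E v x" "x \<noteq> u" by (auto simp: nb_def)
      then have "E u x" using H by blast
      moreover have "x \<noteq> v" using sym[OF x(2)] by blast
      ultimately show "x \<in> nb V E u - {v}" using x(1) by (simp add: nb_def)
    qed
    have fN: "finite (nb V E u - {v})" using fV by (simp add: nb_def)
    have c1: "card (nb V E v - {u}) \<le> card (nb V E u - {v})" using card_mono[OF fN s] .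
    have fNu: "finite (nb V E u)" "finite (nb V E v)" using fV by (auto simp: nb_def)
    have "(u \<in> nb V E v) = (v \<in> nb V E u)" using symE assms(3,4) unfolding nb_def by blast
    then have "card (nb V E v) \<le> card (nb V E u)"
    proof (cases "u \<in> nb V E v")
      case True
      then have "v \<in> nb V E u" using \<open>(u \<in> nb V E v) = (v \<in> nb V E u)\<close> by simp
      then have "0 < card (nb V E u)" "0 < card (nb V E v)" using True fNu card_gt_0_iff by blast+
      then show ?thesis using c1 fNu True \<open>v \<in> nb V E u\<close> by (simp add: card_Diff_singleton)
    next
      case False
      then show ?thesis using c1 \<open>(u \<in> nb V E v) = (v \<in> nb V E u)\<close> by simp
    qed
    then show False using assms(5) by (simp add: degree_def nb_def)
  qed
  have yv: "y \<noteq> v" "y \<noteq> w" using y(3) w(4) sym[OF y(3)] by auto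
  define W where "W = V - {u,v,w,y}"
  have c4: "card {u,v,w,y} = 4" using w y yv uv by auto
  have s4: "{u,v,w,y} \<subseteq> V" using w y assms(3,4) by auto
  have cW: "card W = card V - 4"
    unfolding W_def using card_Diff_subset[OF finite_subset[OF s4 fV] s4] c4 by simp
  have "k - 2 \<le> card W" using cW assms(6,7) by simp
  then obtain T where T: "T \<subseteq> W" "card T = k - 2"
    by (rule obtain_subset_with_card_n) blast
  have fT: "finite T" using T fV W_def finite_subset by blast
  have TV: "T \<subseteq> V" and nT: "u \<notin> T" "v \<notin> T" "w \<notin> T" "y \<notin> T" using T W_def by auto
  have key: "int (card (nb V E u \<inter> insert x T)) - int (card (nb V E v \<inter> insert x T))
      = (int (degree V E u) - int (degree V E v)) div 2"
    if x: "x \<in> V" "x \<noteq> u" "x \<noteq> v" "x \<notin> T" for x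
  proof -
    have S: "insert x T \<subseteq> V" using x TV by auto
    have cS: "card (insert x T) = k - 1" using x fT T assms(6) by simp
    have c1: "card (insert u (insert x T)) = k" using cS fT x nT assms(6) by simp
    have c2: "card (insert v (insert x T)) = k" using cS fT x nT assms(6) by simp
    have e1: "int (card (cutp V E (insert u (insert x T)))) = int d0" using cutk c1 S assms(3) by simp
    have e2: "int (card (cutp V E (insert v (insert x T)))) = int d0" using cutk c2 S assms(4) by simp
    have i1: "int (card (cutp V E (insert u (insert x T)))) = int (card (cutp V E (insert x T))) + int (degree V E u) - 2 * int (card (nb V E u \<inter> insert x T))"
      using cut_insert[OF g S assms(3)] x nT by simp
    have i2: "int (card (cutp V E (insert v (insert x T)))) = int (card (cutp V E (insert x T))) + int (degree V E v) - 2 * int (card (nb V E v \<inter> insert x T))"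
      using cut_insert[OF g S assms(4)] x nT by simp
    have "int (degree V E u) - int (degree V E v) = 2 * (int (card (nb V E u \<inter> insert x T)) - int (card (nb V E v \<inter> insert x T)))"
      using i1 i2 e1 e2 unfolding right_diff_distrib by linarith
    then show ?thesis by simp
  qed
  have fI: "\<And>z. finite (nb V E z \<inter> T)" using fT by simp
  have kw: "int (card (nb V E u \<inter> insert w T)) - int (card (nb V E v \<inter> insert w T))
      = int (card (nb V E u \<inter> T)) + (if E u w then 1 else 0) - int (card (nb V E v \<inter> T))"
  proof -
    have "nb V E v \<inter> insert w T = nb V E v \<inter> T" using w by (auto simp: nb_def)
    moreover have "card (nb V E u \<inter> insert w T) = card (nb V E u \<inter> T) + (if E u w then 1 else 0)"
    proof (cases "E u w")
      case True
      then have "nb V E u \<inter> insert w T = insert w (nb V E u \<inter> T)" using w by (auto simp: nb_def)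
      then show ?thesis using True fI nT by simp
    next
      case False
      then have "nb V E u \<inter> insert w T = nb V E u \<inter> T" by (auto simp: nb_def)
      then show ?thesis using False by simp
    qed
    ultimately show ?thesis by simp
  qed
  have ky: "int (card (nb V E u \<inter> insert y T)) - int (card (nb V E v \<inter> insert y T))
      = int (card (nb V E u \<inter> T)) - int (card (nb V E v \<inter> T)) - 1"
  proof -
    have "nb V E u \<inter> insert y T = nb V E u \<inter> T" using y by (auto simp: nb_def)
    moreover have "nb V E v \<inter> insert y T = insert y (nb V E v \<inter> T)" using y by (auto simp: nb_def)
    ultimately show ?thesis using fI nT by simp
  qed
  have "int (card (nb V E u \<inter> insert w T)) - int (card (nb V E v \<inter> insert w T))
      = int (card (nb V E u \<inter> insert y T)) - int (card (nb V E v \<inter> insert y T))"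
    using key[of w] key[of y] w y yv nT by simp
  then show False using kw ky by (simp split: if_splits)
qed

end
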